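(* Let $V_{\mathrm{total}}\ge0$, $B_{\mathrm{total}}>0$, $R^S_{\mathrm{total}}>0$, $F_{\mathrm{total}}>0$. Problem (P2): minimize $\max_uT_u^{\eta\text{-opt}}(B_u,R_u^S,F_u)$ over $B_u>0$, $R_u^S>0$, $F_u>0$ ($u=1,\dots,U$) subject to $\sum_uV_u^{\eta\text{-opt}}(B_u,R_u^S,F_u)\le V_{\mathrm{total}}$, $\sum_uB_u\le B_{\mathrm{total}}$, $\sum_uR_u^S\le R^S_{\mathrm{total}}$, $\sum_uF_u\le F_{\mathrm{total}}$. Problem (P3): minimize $\max_u\frac{D_u}{B_ur_u}$ over $B_u\ge0$, $R_u^S\ge0$, $F_u\ge0$ subject to $\sum_uB_u\le B_{\mathrm{total}}$, $\sum_uR_u^S\le R^S_{\mathrm{total}}$, $\sum_uF_u\le F_{\mathrm{total}}$, $R_u^S\le B_ur_u\le\frac{R_u^S}{\zeta_u}$ for all $u$, and $\frac{F_u}{\rho_u}=\frac{B_ur_u-R_u^S}{1-\zeta_u}$ for all $u$ (with the convention $D_u/0=+\infty$). Then the optimal values (infima) of (P2) and (P3) are equal.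
   Context: There are users $u=1,\dots,U$, each with constants $D_u>0$, $r_u>0$, $\rho_u>0$, $\zeta_u\in(0,1)$. The functions $T_u^{\eta\text{-opt}}(B_u,R_u^S,F_u)$ and $V_u^{\eta\text{-opt}}(B_u,R_u^S,F_u)$ (for $B_u,R_u^S,F_u>0$) are defined by six exhaustive cases (with $c_u=B_ur_u$): 1. $c_u<R_u^S$: $T^{\eta\text{-opt}}_u=\frac{D_u}{c_u}$, $V^{\eta\text{-opt}}_u=0$. 2. $R_u^S\le c_u<\frac{R_u^S}{\zeta_u}$, $\frac{F_u}{\rho_u}<\frac{c_u-R_u^S}{1-\zeta_u}$: $T^{\eta\text{-opt}}_u=\frac{D_u\rho_u}{F_u(1-\zeta_u)+\rho_uR_u^S}$, $V^{\eta\text{-opt}}_u=\frac{D_u}{c_u}[c_u-R_u^S-(1-\zeta_u)\frac{F_u}{\rho_u}]$. 3. $R_u^S\le c_u<\frac{R_u^S}{\zeta_u}$, $\frac{F_u}{\rho_u}\ge\frac{c_u-R_u^S}{1-\zeta_u}$: $T^{\eta\text{-opt}}_u=\frac{D_u}{c_u}$, $V^{\eta\text{-opt}}_u=0$. 4. $c_u\ge\frac{R_u^S}{\zeta_u}$, $\frac{F_u}{\rho_u}<\frac{R_u^S}{\zeta_u}$: $T^{\eta\text{-opt}}_u=\frac{D_u\rho_u}{F_u(1-\zeta_u)+\rho_uR_u^S}$, $V^{\eta\text{-opt}}_u=\frac{D_u}{c_u}[c_u-R_u^S-(1-\zeta_u)\frac{F_u}{\rho_u}]$. 5. $c_u\ge\frac{R_u^S}{\zeta_u}$,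 $\frac{R_u^S}{\zeta_u}\le\frac{F_u}{\rho_u}<c_u$: $T^{\eta\text{-opt}}_u=\frac{\zeta_uD_u}{R_u^S}$, $V^{\eta\text{-opt}}_u=\frac{D_u}{c_u}[c_u-R_u^S-(1-\zeta_u)\frac{F_u}{\rho_u}]$. 6. $c_u\ge\frac{R_u^S}{\zeta_u}$, $\frac{F_u}{\rho_u}\ge c_u$: $T^{\eta\text{-opt}}_u=\frac{\zeta_uD_u}{R_u^S}$, $V^{\eta\text{-opt}}_u=\frac{D_u}{c_u}(\zeta_uc_u-R_u^S)$. *)

theory Defs
  imports Complex_Main "HOL-Library.Extended_Real"
begin

definition T_opt :: "real \<Rightarrow> real \<Rightarrow> real \<Rightarrow> real \<Rightarrow> real \<Rightarrow> real \<Rightarrow> real \<Rightarrow> real" where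
  "T_opt D r \<rho> \<zeta> B RS F =
    (let c = B * r in
     if c < RS then D / c
     else if c < RS / \<zeta> then
       (if F / \<rho> < (c - RS) / (1 - \<zeta>) then D * \<rho> / (F * (1 - \<zeta>) + \<rho> * RS)
        else D / c)
     else
       (if F / \<rho> < RS / \<zeta> then D * \<rho> / (F * (1 - \<zeta>) + \<rho> * RS)
        else if F / \<rho> < c then \<zeta> * D / RS
        else \<zeta> * D / RS))"

definition V_opt :: "real \<Rightarrow> real \<Rightarrow> real \<Rightarrow> real \<Rightarrow> real \<Rightarrow> real \<Rightarrow> real \<Rightarrow> real" where
  "V_opt D r \<rho> \<zeta> B RS F =
    (let c = B * r in
     if c < RS then 0
     else if c < RS / \<zeta> then
       (if F / \<rho> < (c - RS) / (1 - \<zeta>) then D / c * (c - RS - (1 - \<zeta>) * (F / \<rho>))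
        else 0)
     else
       (if F / \<rho> < RS / \<zeta> then D / c * (c - RS - (1 - \<zeta>) * (F / \<rho>))
        else if F / \<rho> < c then D / c * (c - RS - (1 - \<zeta>) * (F / \<rho>))
        else D / c * (\<zeta> * c - RS)))"

definition P2_value ::
  "nat \<Rightarrow> (nat \<Rightarrow> real) \<Rightarrow> (nat \<Rightarrow> real) \<Rightarrow> (nat \<Rightarrow> real) \<Rightarrow> (nat \<Rightarrow> real)
   \<Rightarrow> real \<Rightarrow> real \<Rightarrow> real \<Rightarrow> real \<Rightarrow> ereal" where
  "P2_value U D r \<rho> \<zeta> Vtot Btot Rtot Ftot =
    Inf { Max ((\<lambda>u. ereal (T_opt (D u) (r u) (\<rho> u) (\<zeta> u) (B u) (RS u) (F u))) ` {1..U})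
        | B RS F.
          (\<forall>u\<in>{1..U}. B u > 0 \<and> RS u > 0 \<and> F u > 0)
          \<and> (\<Sum>u\<in>{1..U}. V_opt (D u) (r u) (\<rho> u) (\<zeta> u) (B u) (RS u) (F u)) \<le> Vtot
          \<and> (\<Sum>u\<in>{1..U}. B u) \<le> Btot
          \<and> (\<Sum>u\<in>{1..U}. RS u) \<le> Rtot
          \<and> (\<Sum>u\<in>{1..U}. F u) \<le> Ftot }"

definition ratio_inf :: "real \<Rightarrow> real \<Rightarrow> ereal" where
  "ratio_inf D c = (if c = 0 then \<infinity> else ereal (D / c))"

definition P3_value ::
  "nat \<Rightarrow> (nat \<Rightarrow> real) \<Rightarrow> (nat \<Rightarrow> real) \<Rightarrow> (nat \<Rightarrow> real) \<Rightarrow> (nat \<Rightarrow> real)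
   \<Rightarrow> real \<Rightarrow> real \<Rightarrow> real \<Rightarrow> ereal" where
  "P3_value U D r \<rho> \<zeta> Btot Rtot Ftot =
    Inf { Max ((\<lambda>u. ratio_inf (D u) (B u * r u)) ` {1..U})
        | B RS F.
          (\<forall>u\<in>{1..U}. B u \<ge> 0 \<and> RS u \<ge> 0 \<and> F u \<ge> 0)
          \<and> (\<Sum>u\<in>{1..U}. B u) \<le> Btot
          \<and> (\<Sum>u\<in>{1..U}. RS u) \<le> Rtot
          \<and> (\<Sum>u\<in>{1..U}. F u) \<le> Ftot
          \<and> (\<forall>u\<in>{1..U}. RS u \<le> B u * r u \<and> B u * r u \<le> RS u / \<zeta> u)
          \<and> (\<forall>u\<in>{1..U}. F u / \<rho> u = (B u * r u - RS u) / (1 - \<zeta> u)) }"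

end

theory Submission imports Defs begin
lemma T_eq:
  assumes "D>0" "r>0" "\<rho>>0" "0<\<zeta>" "\<zeta><1" "B>0" "R>0" "F>0"
  shows "T_opt D r \<rho> \<zeta> B R F = D / min (B*r) (min (R/\<zeta>) (R + (1-\<zeta>)*(F/\<rho>)))"
proof -
  have a: "R < R/\<zeta>" using assms by (simp add: field_simps)
  have b: "F / \<rho> < (B*r - R) / (1 - \<zeta>) \<longleftrightarrow> R + (1-\<zeta>)*(F/\<rho>) < B*r"
    using assms by (simp add: field_simps)
  have c0: "R/\<zeta> = R + (1-\<zeta>)*(R/\<zeta>)" using assms by (simp add: field_simps)
  have c: "F / \<rho> < R/\<zeta> \<longleftrightarrow> R + (1-\<zeta>)*(F/\<rho>) < R/\<zeta>"
    apply (subst (2) c0) using assms by (simp del: times_divide_eq_right)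
  have d: "D * \<rho> / (F * (1 - \<zeta>) + \<rho> * R) = D / (R + (1-\<zeta>)*(F/\<rho>))"
    using assms by (simp add: field_simps)
  have e: "\<zeta> * D / R = D / (R/\<zeta>)" using assms by simp
  have f: "0 \<le> (1-\<zeta>)*(F/\<rho>)" using assms by simp
  show ?thesis unfolding T_opt_def Let_def d e
    using a b c f by (auto simp: min_def)
qed

lemma V_zero:
  assumes "r>0" "\<rho>>0" "0<\<zeta>" "\<zeta><1" "R \<le> B*r" "B*r \<le> R/\<zeta>"
    "F/\<rho> \<ge> (B*r - R)/(1-\<zeta>)"
  shows "V_opt D r \<rho> \<zeta> B R F = 0"
proof (cases "B*r < R/\<zeta>")
  case True then show ?thesis using assms unfolding V_opt_def Let_def by auto
next
  case False
  then have e: "B*r = R/\<zeta>" using assms by auto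
  have "(B*r - R)/(1-\<zeta>) = R/\<zeta>" unfolding e using assms by (simp add: field_simps)
  then have "F/\<rho> \<ge> R/\<zeta>" using assms by simp
  moreover have "\<zeta> * (R/\<zeta>) - R = 0" using assms by simp
  ultimately show ?thesis using assms e unfolding V_opt_def Let_def by auto
qed

lemma ereal_limit_le:
  fixes p :: ereal
  assumes "X > 0" "\<And>t. 0<t \<Longrightarrow> t<1 \<Longrightarrow> p \<le> ereal (X/t)"
  shows "p \<le> ereal X"
proof (rule ccontr)
  assume "\<not> p \<le> ereal X"
  then have gt: "p > ereal X" by simp
  show False
  proof (cases p)
    case (real q)
    then have q: "q > X" using gt by simp
    define a where "a = X/q"
    define t where "t = (a + 1)/2"
    have "a < 1" using q assms unfolding a_def by simp
    moreover have "a > 0" using q assms unfolding a_def by simp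
    ultimately have t: "0<t" "t<1" "X/q < t" unfolding t_def a_def[symmetric] by simp_all
    then have "X < t*q" using q assms by (simp add: field_simps)
    then have "X/t < q" using t by (simp add: field_simps)
    then show False using assms(2)[OF t(1,2)] real by simp
  next
    case PInf then show False using assms(2)[of "1/2"] by simp
  next
    case MInf then show False using gt by simp
  qed
qed

theorem theorem3:
  fixes U :: nat and D r \<rho> \<zeta> :: "nat \<Rightarrow> real" and Vtot Btot Rtot Ftot :: real
  assumes "U \<ge> 1"
    and "\<forall>u\<in>{1..U}. D u > 0 \<and> r u > 0 \<and> \<rho> u > 0 \<and> 0 < \<zeta> u \<and> \<zeta> u < 1"
    and "Vtot \<ge> 0" and "Btot > 0" and "Rtot > 0" and "Ftot > 0"
  shows "P2_value U D r \<rho> \<zeta> Vtot Btot Rtot Ftot = P3_value U D r \<rho> \<zeta> Btot Rtot Ftot"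
proof (rule antisym)
  have ne: "{1..U} \<noteq> {}" using assms(1) by simp
  show "P3_value U D r \<rho> \<zeta> Btot Rtot Ftot \<le> P2_value U D r \<rho> \<zeta> Vtot Btot Rtot Ftot"
    unfolding P2_value_def
  proof (rule Inf_greatest, clarify)
    fix B RS F
    assume pos: "\<forall>u\<in>{1..U}. B u > 0 \<and> RS u > 0 \<and> F u > 0"
      and sB: "(\<Sum>u\<in>{1..U}. B u) \<le> Btot" and sR: "(\<Sum>u\<in>{1..U}. RS u) \<le> Rtot"
      and sF: "(\<Sum>u\<in>{1..U}. F u) \<le> Ftot"
    define e where "e u = min (B u * r u) (min (RS u/\<zeta> u) (RS u + (1-\<zeta> u)*(F u/\<rho> u)))" for u
    define B' where "B' u = e u / r u" for u
    define R' where "R' u = min (RS u) (e u)" for u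
    define F' where "F' u = (if e u \<le> RS u then 0 else \<rho> u * (e u - RS u)/(1-\<zeta> u))" for u
    have epos: "e u > 0" if u: "u \<in> {1..U}" for u
    proof -
      have c: "r u > 0" "\<rho> u > 0" "0 < \<zeta> u" "\<zeta> u < 1" "B u > 0" "RS u > 0" "F u > 0"
        using assms(2) pos u by auto
      have "(1-\<zeta> u)*(F u/\<rho> u) > 0" using c by simp
      then have "RS u + (1-\<zeta> u)*(F u/\<rho> u) > 0" using c(6) by linarith
      moreover have "RS u/\<zeta> u > 0" "B u * r u > 0" using c by simp_all
      ultimately show ?thesis unfolding e_def by simp
    qed
    have Teq: "T_opt (D u) (r u) (\<rho> u) (\<zeta> u) (B u) (RS u) (F u) = D u / e u" if "u \<in> {1..U}" for u
      unfolding e_def using pos assms(2) that by (intro T_eq) auto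
    have ratio: "ratio_inf (D u) (B' u * r u) = ereal (D u / e u)" if "u \<in> {1..U}" for u
    proof -
      have "r u > 0" using assms(2) that by auto
      then show ?thesis using epos[OF that] unfolding ratio_inf_def B'_def by simp
    qed
    have img: "(\<lambda>u. ereal (T_opt (D u) (r u) (\<rho> u) (\<zeta> u) (B u) (RS u) (F u))) ` {1..U}
        = (\<lambda>u. ratio_inf (D u) (B' u * r u)) ` {1..U}"
      by (rule image_cong) (auto simp: Teq ratio)
    have feas: "(\<forall>u\<in>{1..U}. B' u \<ge> 0 \<and> R' u \<ge> 0 \<and> F' u \<ge> 0)
          \<and> (\<Sum>u\<in>{1..U}. B' u) \<le> Btot
          \<and> (\<Sum>u\<in>{1..U}. R' u) \<le> Rtot
          \<and> (\<Sum>u\<in>{1..U}. F' u) \<le> Ftot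
          \<and> (\<forall>u\<in>{1..U}. R' u \<le> B' u * r u \<and> B' u * r u \<le> R' u / \<zeta> u)
          \<and> (\<forall>u\<in>{1..U}. F' u / \<rho> u = (B' u * r u - R' u) / (1 - \<zeta> u))"
    proof (intro conjI ballI)
      fix u assume u: "u \<in> {1..U}"
      have c: "D u > 0" "r u > 0" "\<rho> u > 0" "0 < \<zeta> u" "\<zeta> u < 1" using assms(2) u by auto
      have ep: "e u > 0" using epos[OF u] .
      have Br: "B' u * r u = e u" unfolding B'_def using c by simp
      have e1: "e u \<le> B u * r u" "e u \<le> RS u/\<zeta> u" "e u \<le> RS u + (1-\<zeta> u)*(F u/\<rho> u)"
        unfolding e_def by auto
      show "B' u \<ge> 0" unfolding B'_def using ep c by simp
      have "RS u > 0" using pos u by blast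
      then show "R' u \<ge> 0" unfolding R'_def using ep by simp
      show "F' u \<ge> 0" unfolding F'_def using c by (auto simp: field_simps)
      show "R' u \<le> B' u * r u" unfolding Br R'_def by simp
      show "B' u * r u \<le> R' u / \<zeta> u"
      proof (cases "e u \<le> RS u")
        case True
        have "e u \<le> e u / \<zeta> u" using ep c by (simp add: field_simps)
        then show ?thesis unfolding Br R'_def using True by simp
      next
        case False then show ?thesis unfolding Br R'_def using e1 by simp
      qed
      show "F' u / \<rho> u = (B' u * r u - R' u) / (1 - \<zeta> u)"
        unfolding Br R'_def F'_def using c by auto
    next
      have "(\<Sum>u\<in>{1..U}. B' u) \<le> (\<Sum>u\<in>{1..U}. B u)"
      proof (rule sum_mono)
        fix u assume u: "u \<in> {1..U}"
        have "e u \<le> B u * r u" unfolding e_def by auto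
        then show "B' u \<le> B u" unfolding B'_def using assms(2) u by (simp add: field_simps)
      qed
      then show "(\<Sum>u\<in>{1..U}. B' u) \<le> Btot" using sB by simp
    next
      have "(\<Sum>u\<in>{1..U}. R' u) \<le> (\<Sum>u\<in>{1..U}. RS u)"
        by (rule sum_mono) (simp add: R'_def)
      then show "(\<Sum>u\<in>{1..U}. R' u) \<le> Rtot" using sR by simp
    next
      have "(\<Sum>u\<in>{1..U}. F' u) \<le> (\<Sum>u\<in>{1..U}. F u)"
      proof (rule sum_mono)
        fix u assume u: "u \<in> {1..U}"
        have c: "\<rho> u > 0" "0 < \<zeta> u" "\<zeta> u < 1" using assms(2) u by auto
        have e3: "e u \<le> RS u + (1-\<zeta> u)*(F u/\<rho> u)" unfolding e_def by auto
        show "F' u \<le> F u"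
        proof (cases "e u \<le> RS u")
          case True
          have "F u > 0" using pos u by blast
          then show ?thesis unfolding F'_def using True by simp
        next
          case False
          have "e u - RS u \<le> (1-\<zeta> u)*(F u/\<rho> u)" using e3 by simp
          then have "\<rho> u * (e u - RS u) \<le> (1-\<zeta> u) * F u" using c
            by (simp add: field_simps)
          then show ?thesis unfolding F'_def using False c by (simp add: field_simps)
        qed
      qed
      then show "(\<Sum>u\<in>{1..U}. F' u) \<le> Ftot" using sF by simp
    qed
    have "P3_value U D r \<rho> \<zeta> Btot Rtot Ftot \<le> Max ((\<lambda>u. ratio_inf (D u) (B' u * r u)) ` {1..U})"
      unfolding P3_value_def by (rule Inf_lower) (use feas in blast)
    then show "P3_value U D r \<rho> \<zeta> Btot Rtot Ftot
       \<le> Max ((\<lambda>u. ereal (T_opt (D u) (r u) (\<rho> u) (\<zeta> u) (B u) (RS u) (F u))) ` {1..U})"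
      unfolding img by (simp add: P3_value_def)
  qed
next
  show "P2_value U D r \<rho> \<zeta> Vtot Btot Rtot Ftot \<le> P3_value U D r \<rho> \<zeta> Btot Rtot Ftot"
    unfolding P3_value_def
  proof (rule Inf_greatest, clarify)
    fix B RS F
    assume nn: "\<forall>u\<in>{1..U}. B u \<ge> 0 \<and> RS u \<ge> 0 \<and> F u \<ge> 0"
      and sB: "(\<Sum>u\<in>{1..U}. B u) \<le> Btot" and sR: "(\<Sum>u\<in>{1..U}. RS u) \<le> Rtot"
      and sF: "(\<Sum>u\<in>{1..U}. F u) \<le> Ftot"
      and bd: "\<forall>u\<in>{1..U}. RS u \<le> B u * r u \<and> B u * r u \<le> RS u / \<zeta> u"
      and eqF: "\<forall>u\<in>{1..U}. F u / \<rho> u = (B u * r u - RS u) / (1 - \<zeta> u)"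
    let ?x = "Max ((\<lambda>u. ratio_inf (D u) (B u * r u)) ` {1..U})"
    have le: "ratio_inf (D u) (B u * r u) \<le> ?x" if "u \<in> {1..U}" for u
      using that by (intro Max_ge) auto
    show "P2_value U D r \<rho> \<zeta> Vtot Btot Rtot Ftot \<le> ?x"
    proof (cases "?x = \<infinity>")
      case True then show ?thesis by simp
    next
      case False
      have Bp: "B u > 0" if u: "u \<in> {1..U}" for u
      proof (rule ccontr)
        assume "\<not> B u > 0"
        then have "B u = 0" using nn u by force
        then have "ratio_inf (D u) (B u * r u) = \<infinity>" unfolding ratio_inf_def by simp
        then show False using le[OF u] False by simp
      qed
      have xge: "ereal (D u / (B u * r u)) \<le> ?x" if u: "u \<in> {1..U}" for u
      proof -
        have "r u > 0" using assms(2) u by blast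
        then have "ratio_inf (D u) (B u * r u) = ereal (D u / (B u * r u))"
          using Bp[OF u] unfolding ratio_inf_def by simp
        then show ?thesis using le[OF u] by simp
      qed
      have "1 \<in> {1..U}" using assms(1) by simp
      from xge[OF this] have "?x > -\<infinity>" by auto
      with False obtain X where X: "?x = ereal X" by (cases ?x) auto
      have Xge: "D u / (B u * r u) \<le> X" if "u \<in> {1..U}" for u using xge[OF that] X by simp
      have Xpos: "X > 0"
      proof -
        have u1: "1 \<in> {1..U}" using assms(1) by simp
        have "D 1 / (B 1 * r 1) > 0" using Bp[OF u1] assms(2) u1 by auto
        then show ?thesis using Xge[OF u1] by simp
      qed
      have "P2_value U D r \<rho> \<zeta> Vtot Btot Rtot Ftot \<le> ereal X"
      proof (rule ereal_limit_le[OF Xpos])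
        fix t :: real assume t: "0 < t" "t < 1"
        define B' where "B' u = t * B u" for u
        define R' where "R' u = t * RS u" for u
        define F' where "F' u = t * F u + (1-t) * Ftot / real U" for u
        have Up: "real U > 0" using assms(1) by simp
        have slack: "(1-t) * Ftot / real U > 0" using t assms(6) Up by simp
        have per: "B' u > 0 \<and> R' u > 0 \<and> F' u > 0
             \<and> V_opt (D u) (r u) (\<rho> u) (\<zeta> u) (B' u) (R' u) (F' u) = 0
             \<and> T_opt (D u) (r u) (\<rho> u) (\<zeta> u) (B' u) (R' u) (F' u) \<le> X / t"
          if u: "u \<in> {1..U}" for u
        proof -
          have c: "D u > 0" "r u > 0" "\<rho> u > 0" "0 < \<zeta> u" "\<zeta> u < 1" using assms(2) u by auto
          have b1: "RS u \<le> B u * r u" "B u * r u \<le> RS u / \<zeta> u" using bd u by auto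
          have cp: "B u * r u > 0" using Bp[OF u] c by simp
          have Rp: "RS u > 0"
          proof -
            have "B u * r u * \<zeta> u \<le> RS u" using b1(2) c by (simp add: field_simps)
            moreover have "B u * r u * \<zeta> u > 0" using cp c by simp
            ultimately show ?thesis by simp
          qed
          have F0: "F u \<ge> 0" using nn u by auto
          have B'p: "B' u > 0" unfolding B'_def using t Bp[OF u] by simp
          have R'p: "R' u > 0" unfolding R'_def using t Rp by simp
          have F'p: "F' u > 0" unfolding F'_def using t F0 slack by (simp add: add_nonneg_pos)
          have c': "B' u * r u = t * (B u * r u)" unfolding B'_def by simp
          have b1': "R' u \<le> B' u * r u" "B' u * r u \<le> R' u / \<zeta> u"
            unfolding c' R'_def using b1 t mult_left_mono[OF b1(2), of t]
            by (auto simp: mult_left_mono)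
          have Fge: "F' u / \<rho> u \<ge> t * (F u / \<rho> u)"
            unfolding F'_def using slack c by (simp add: field_simps)
          have "t * (F u / \<rho> u) = (B' u * r u - R' u) / (1 - \<zeta> u)"
            unfolding c' R'_def using eqF u by (simp add: field_simps)
          with Fge have Fc: "F' u / \<rho> u \<ge> (B' u * r u - R' u) / (1 - \<zeta> u)" by simp
          have V0: "V_opt (D u) (r u) (\<rho> u) (\<zeta> u) (B' u) (R' u) (F' u) = 0"
            using V_zero[OF c(2,3,4,5) b1' Fc] .
          have mn: "min (B' u * r u) (min (R' u/\<zeta> u) (R' u + (1-\<zeta> u)*(F' u/\<rho> u))) = B' u * r u"
          proof -
            have "B' u * r u - R' u \<le> (1-\<zeta> u) * (F' u / \<rho> u)"
              using Fc c by (simp add: field_simps)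
            then show ?thesis using b1' by simp
          qed
          have T: "T_opt (D u) (r u) (\<rho> u) (\<zeta> u) (B' u) (R' u) (F' u) = D u / (B' u * r u)"
            using T_eq[OF c B'p R'p F'p] mn by simp
          have "D u / (B' u * r u) = (D u / (B u * r u)) / t" unfolding c' by simp
          also have "\<dots> \<le> X / t" using divide_right_mono[OF Xge[OF u], of t] t by (simp del: divide_divide_eq_left)
          finally show ?thesis using B'p R'p F'p V0 T by simp
        qed
        have feas: "(\<forall>u\<in>{1..U}. B' u > 0 \<and> R' u > 0 \<and> F' u > 0)
          \<and> (\<Sum>u\<in>{1..U}. V_opt (D u) (r u) (\<rho> u) (\<zeta> u) (B' u) (R' u) (F' u)) \<le> Vtot
          \<and> (\<Sum>u\<in>{1..U}. B' u) \<le> Btot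
          \<and> (\<Sum>u\<in>{1..U}. R' u) \<le> Rtot
          \<and> (\<Sum>u\<in>{1..U}. F' u) \<le> Ftot"
        proof (intro conjI)
          show "\<forall>u\<in>{1..U}. B' u > 0 \<and> R' u > 0 \<and> F' u > 0" using per by blast
          have "(\<Sum>u\<in>{1..U}. V_opt (D u) (r u) (\<rho> u) (\<zeta> u) (B' u) (R' u) (F' u)) = 0"
            using per by (intro sum.neutral) blast
          then show "(\<Sum>u\<in>{1..U}. V_opt (D u) (r u) (\<rho> u) (\<zeta> u) (B' u) (R' u) (F' u)) \<le> Vtot"
            using assms(3) by simp
          have "(\<Sum>u\<in>{1..U}. B' u) = t * (\<Sum>u\<in>{1..U}. B u)" unfolding B'_def by (simp add: sum_distrib_left)
          also have "\<dots> \<le> t * Btot" using sB t by (simp add: mult_left_mono)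
          also have "\<dots> \<le> Btot" using t assms(4) by simp
          finally show "(\<Sum>u\<in>{1..U}. B' u) \<le> Btot" .
          have "(\<Sum>u\<in>{1..U}. R' u) = t * (\<Sum>u\<in>{1..U}. RS u)" unfolding R'_def by (simp add: sum_distrib_left)
          also have "\<dots> \<le> t * Rtot" using sR t by (simp add: mult_left_mono)
          also have "\<dots> \<le> Rtot" using t assms(5) by simp
          finally show "(\<Sum>u\<in>{1..U}. R' u) \<le> Rtot" .
          have "(\<Sum>u\<in>{1..U}. F' u) = t * (\<Sum>u\<in>{1..U}. F u) + (1-t) * Ftot"
            unfolding F'_def using Up by (simp add: sum.distrib sum_distrib_left)
          also have "\<dots> \<le> t * Ftot + (1-t) * Ftot" using sF t by (simp add: mult_left_mono)
          also have "\<dots> = Ftot" by (simp add: algebra_simps)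
          finally show "(\<Sum>u\<in>{1..U}. F' u) \<le> Ftot" .
        qed
        have "P2_value U D r \<rho> \<zeta> Vtot Btot Rtot Ftot
           \<le> Max ((\<lambda>u. ereal (T_opt (D u) (r u) (\<rho> u) (\<zeta> u) (B' u) (R' u) (F' u))) ` {1..U})"
          unfolding P2_value_def by (rule Inf_lower) (use feas in blast)
        also have "\<dots> \<le> ereal (X / t)"
          using per assms(1) by (subst Max_le_iff) auto
        finally show "P2_value U D r \<rho> \<zeta> Vtot Btot Rtot Ftot \<le> ereal (X / t)" .
      qed
      then show ?thesis using X by simp
    qed
  qed
qed

end
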